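(* Let $A$, $Q$ and $H\subseteq A^Q$ be non-empty finite sets, $n\ge3$ a natural number, and $\mathcal F$ a clone with carrier $A$ satisfying $\Delta^s_n$. Then $H\in\mathrm{Inv}_Q\mathcal F$ if and only if both of the following hold: (1) $H|_P\in\mathrm{Inv}_P\mathcal F$ for all $P\in[Q]^1\cup[Q]^{2,0}_H\cup\{Q^{(n)}_H\}$; (2) $H$ is decomposable over $[Q]^1\cup[Q]^{2,0}_H\cup\{Q^{(n)}_H\}$.
   Context: $\mathcal O(A)=\bigcup_{n<\omega}A^{A^n}$; $\mathcal F_{[n]}=\mathcal F\cap A^{A^n}$. Elements of $A^n$ are sequences $\mathbf x=x_0\dots x_{n-1}$; $\mathrm{ran}\,\mathbf x$ is the set of entries; $A^n_k=\{\mathbf x:|\mathrm{ran}\,\mathbf x|=k\}$, $A^n_{<n}=\bigcup_{k<n}A^n_k$. A clone with carrier $A$ is a subset of $\mathcal O(A)$ containing all projections and closed under composition. For $f\in\mathcal O(A)_{[m]}$ and $h_i\in A^Q$, $f(h_0,\dots,h_{m-1})$ is $q\mapsto f(h_0(q)\dots h_{m-1}(q))$; $\mathrm{Inv}_Q\mathcal F$ is the set of $H\subseteq A^Q$ closed under all such compositions with $f\in\mathcal F$. $h|_P$ is the restriction of $h$ to $P\cap\mathrm{dom}\,h$, $H|_P=\{h|_P:h\in H\}$, $H(q)=\{h(q):h\in H\}$. For $R\subseteq Q$, $(H|_R)|^Q=\{f\in A^Q:f|_R\in H|_R\}$; $H$ is decomposable over $\mathscr R\subseteq\mathscr P(Q)$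 if $H=\bigcap_{R\in\mathscr R}(H|_R)|^Q$. $[Q]^k$ is the set of $k$-element subsets of $Q$; $S_A$ the set of permutations of $A$. $[Q]^{2,0}_H$ is the set of $\{p,q\}\in[Q]^2$ for which there is $\sigma\in S_A$ with $h(q)=\sigma(h(p))$ for all $h\in H$. $Q^{(n)}_H=\{q\in Q:|H(q)|<n\}$. $\mathcal F$ satisfies $\Delta^s_n$ if there is $i<n$ such that for every $\mathbf a\in A^n_n$ and every $a\in\mathrm{ran}\,\mathbf a$ there is $s\in\mathcal F_{[n]}$ with $s(\mathbf a)=a$ and $s(\mathbf x)=x_i$ for all $\mathbf x=x_0\dots x_{n-1}\in A^n_{<n}$. *)

theory Defs
  imports "HOL-Library.FuncSet"
begin

text \<open>Tuples in A^n are functions {..<n} ->E A; an operation is a pair (arity, function),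
  the function being extensional on A^n.  Elements of A^Q are functions Q ->E A.\<close>

type_synonym 'a op = "nat \<times> ((nat \<Rightarrow> 'a) \<Rightarrow> 'a)"

definition tuples :: "'a set \<Rightarrow> nat \<Rightarrow> (nat \<Rightarrow> 'a) set" where
  "tuples A n = {..<n} \<rightarrow>\<^sub>E A"

definition ops :: "'a set \<Rightarrow> 'a op set" where
  "ops A = {(n, f). f \<in> tuples A n \<rightarrow>\<^sub>E A}"

definition is_clone :: "'a set \<Rightarrow> 'a op set \<Rightarrow> bool" where
  "is_clone A F \<longleftrightarrow>
     F \<subseteq> ops A \<and>
     (\<forall>n i. i < n \<longrightarrow> (n, restrict (\<lambda>x. x i) (tuples A n)) \<in> F) \<and>
     (\<forall>m f n g. (m, f) \<in> F \<and> (\<forall>i<m. (n, g i) \<in> F) \<longrightarrow>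
        (n, restrict (\<lambda>x. f (\<lambda>i\<in>{..<m}. g i x)) (tuples A n)) \<in> F)"

definition Inv :: "'a set \<Rightarrow> 'q set \<Rightarrow> 'a op set \<Rightarrow> ('q \<Rightarrow> 'a) set set" where
  "Inv A Q F = {H. H \<subseteq> Q \<rightarrow>\<^sub>E A \<and>
     (\<forall>m f h. (m, f) \<in> F \<and> (\<forall>i<m. h i \<in> H) \<longrightarrow>
        (\<lambda>q\<in>Q. f (\<lambda>i\<in>{..<m}. h i q)) \<in> H)}"

definition restr_set :: "('q \<Rightarrow> 'a) set \<Rightarrow> 'q set \<Rightarrow> ('q \<Rightarrow> 'a) set" where
  "restr_set H P = (\<lambda>h. restrict h P) ` H"

definition lift_set :: "'a set \<Rightarrow> 'q set \<Rightarrow> 'q set \<Rightarrow> ('q \<Rightarrow> 'a) set \<Rightarrow> ('q \<Rightarrow> 'a) set" where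
  "lift_set A Q R H = {f \<in> Q \<rightarrow>\<^sub>E A. restrict f R \<in> restr_set H R}"

definition decomposable :: "'a set \<Rightarrow> 'q set \<Rightarrow> 'q set set \<Rightarrow> ('q \<Rightarrow> 'a) set \<Rightarrow> bool" where
  "decomposable A Q RR H \<longleftrightarrow> H = (\<Inter>R\<in>RR. lift_set A Q R H)"

definition ksubsets :: "'q set \<Rightarrow> nat \<Rightarrow> 'q set set" where
  "ksubsets Q k = {S. S \<subseteq> Q \<and> finite S \<and> card S = k}"

definition pairs0 :: "'a set \<Rightarrow> 'q set \<Rightarrow> ('q \<Rightarrow> 'a) set \<Rightarrow> 'q set set" where
  "pairs0 A Q H = {S \<in> ksubsets Q 2. \<exists>p q. S = {p, q} \<and>
      (\<exists>\<sigma>. bij_betw \<sigma> A A \<and> (\<forall>h\<in>H. h q = \<sigma> (h p)))}"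

definition proj_set :: "('q \<Rightarrow> 'a) set \<Rightarrow> 'q \<Rightarrow> 'a set" where
  "proj_set H q = (\<lambda>h. h q) ` H"

definition small_coords :: "'q set \<Rightarrow> ('q \<Rightarrow> 'a) set \<Rightarrow> nat \<Rightarrow> 'q set" where
  "small_coords Q H n = {q \<in> Q. card (proj_set H q) < n}"

definition tuples_k :: "'a set \<Rightarrow> nat \<Rightarrow> nat \<Rightarrow> (nat \<Rightarrow> 'a) set" where
  "tuples_k A n k = {x \<in> tuples A n. card (x ` {..<n}) = k}"

definition tuples_lt :: "'a set \<Rightarrow> nat \<Rightarrow> (nat \<Rightarrow> 'a) set" where
  "tuples_lt A n = (\<Union>k<n. tuples_k A n k)"

definition Delta_s :: "'a set \<Rightarrow> 'a op set \<Rightarrow> nat \<Rightarrow> bool" where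
  "Delta_s A F n \<longleftrightarrow> (\<exists>i<n. \<forall>a\<in>tuples_k A n n. \<forall>c\<in>a ` {..<n}.
     \<exists>s. (n, s) \<in> F \<and> s a = c \<and> (\<forall>x\<in>tuples_lt A n. s x = x i))"

end

theory Submission
  imports Defs
begin


lemma three_idx: "3 \<le> (n::nat) \<Longrightarrow> i < n \<Longrightarrow> \<exists>j k. j < n \<and> k < n \<and> j \<noteq> i \<and> k \<noteq> i \<and> j \<noteq> k"
proof -
  assume a: "3 \<le> n" "i < n"
  show ?thesis
  proof (cases "i = 0")
    case True then show ?thesis using a by (intro exI[of _ 1] exI[of _ 2]) simp
  next
    case False
    show ?thesis
    proof (cases "i = 1")
      case True then show ?thesis using a by (intro exI[of _ 0] exI[of _ 2]) simp
    next
      case False then show ?thesis using a \<open>i \<noteq> 0\<close> by (intro exI[of _ 0] exI[of _ 1]) simp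
    qed
  qed
qed

lemma tup3:
  assumes fin: "finite V" and nV: "n \<le> card V" and n3: "3 \<le> n" and i: "i < n"
    and x: "x0 \<in> V" "x1 \<in> V" "x2 \<in> V" "x0 \<noteq> x1" "x0 \<noteq> x2" "x1 \<noteq> x2"
  shows "\<exists>e j k. inj_on e {..<n} \<and> e ` {..<n} \<subseteq> V \<and> j < n \<and> k < n \<and> j \<noteq> i \<and> k \<noteq> i
     \<and> j \<noteq> k \<and> e i = x0 \<and> e j = x1 \<and> e k = x2"
proof -
  obtain j k where jk: "j < n" "k < n" "j \<noteq> i" "k \<noteq> i" "j \<noteq> k"
    using three_idx[OF n3 i] by blast
  define K where "K = {..<n} - {i,j,k}"
  define W where "W = V - {x0,x1,x2}"
  have cK: "card K = n - 3" unfolding K_def using jk i by (simp add: card_Diff_subset)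
  have cW: "card W = card V - 3" unfolding W_def using x fin by (simp add: card_Diff_subset)
  then have "card K \<le> card W" using cK nV by simp
  then obtain W' where W': "W' \<subseteq> W" "card W' = card K" "finite W'"
    by (metis obtain_subset_with_card_n)
  obtain b where b: "bij_betw b K W'"
    using finite_same_card_bij[of K W'] W' unfolding K_def by auto
  define e where "e t = (if t = i then x0 else if t = j then x1 else if t = k then x2 else b t)" for t
  have bK: "t \<in> K \<Longrightarrow> b t \<in> W'" for t using b by (auto simp: bij_betw_def)
  have eK: "t \<in> K \<Longrightarrow> e t = b t" for t unfolding e_def K_def by auto
  have eN: "t \<notin> K \<Longrightarrow> t < n \<Longrightarrow> e t \<in> {x0,x1,x2}" for t unfolding e_def K_def by auto
  have W'd: "y \<in> W' \<Longrightarrow> y \<notin> {x0,x1,x2}" for y using W' unfolding W_def by auto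
  have binj: "inj_on b K" using b by (simp add: bij_betw_def)
  have "inj_on e {..<n}"
  proof (rule inj_onI)
    fix s t assume st: "s \<in> {..<n}" "t \<in> {..<n}" "e s = e t"
    show "s = t"
    proof (cases "s \<in> K"; cases "t \<in> K")
      assume "s \<in> K" "t \<in> K"
      then show ?thesis using st binj eK by (metis inj_onD)
    next
      assume a: "s \<in> K" "t \<notin> K"
      then have "e s \<in> W'" using eK bK by simp
      moreover have "e t \<in> {x0,x1,x2}" using eN[of t] a st by simp
      ultimately show ?thesis using W'd st by simp
    next
      assume a: "s \<notin> K" "t \<in> K"
      then have "e t \<in> W'" using eK bK by simp
      moreover have "e s \<in> {x0,x1,x2}" using eN[of s] a st by simp
      ultimately show ?thesis using W'd st by simp
    next
      assume "s \<notin> K" "t \<notin> K"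
      then have "s \<in> {i,j,k}" "t \<in> {i,j,k}" using st unfolding K_def by auto
      then show ?thesis using st x jk unfolding e_def by auto
    qed
  qed
  moreover have "e ` {..<n} \<subseteq> V"
  proof
    fix y assume "y \<in> e ` {..<n}"
    then obtain t where t: "t < n" "y = e t" by auto
    show "y \<in> V"
    proof (cases "t \<in> K")
      case True then show ?thesis using t eK bK W' unfolding W_def by auto
    next
      case False then show ?thesis using t eN x by auto
    qed
  qed
  moreover have "e i = x0" "e j = x1" "e k = x2" using jk by (simp_all add: e_def)
  ultimately show ?thesis using jk by blast
qed

lemma bij_extend:
  assumes fA: "finite A" and X: "X \<subseteq> A" and Y: "Y \<subseteq> A" and b: "bij_betw \<phi> X Y"
  shows "\<exists>\<sigma>. bij_betw \<sigma> A A \<and> (\<forall>x\<in>X. \<sigma> x = \<phi> x)"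
proof -
  have fX: "finite X" "finite Y" using fA X Y finite_subset by auto
  have "card X = card Y" using b by (rule bij_betw_same_card)
  then have "card (A - X) = card (A - Y)" using fX X Y by (simp add: card_Diff_subset)
  then obtain \<psi> where \<psi>: "bij_betw \<psi> (A - X) (A - Y)"
    using finite_same_card_bij[of "A - X" "A - Y"] fA by auto
  define \<sigma> where "\<sigma> x = (if x \<in> X then \<phi> x else \<psi> x)" for x
  have 1: "bij_betw \<sigma> X Y" using b by (rule bij_betw_cong[THEN iffD1, rotated]) (simp add: \<sigma>_def)
  have 2: "bij_betw \<sigma> (A - X) (A - Y)" using \<psi> by (rule bij_betw_cong[THEN iffD1, rotated]) (simp add: \<sigma>_def)
  have "bij_betw \<sigma> (X \<union> (A - X)) (Y \<union> (A - Y))" by (rule bij_betw_combine[OF 1 2]) auto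
  moreover have "X \<union> (A - X) = A" "Y \<union> (A - Y) = A" using X Y by auto
  ultimately show ?thesis by (intro exI[of _ \<sigma>]) (simp add: \<sigma>_def)
qed

lemma third_elem:
  assumes "finite V" "3 \<le> card V" shows "\<exists>d\<in>V. d \<noteq> a \<and> d \<noteq> b"
proof (rule ccontr)
  assume "\<not> ?thesis"
  then have "V \<subseteq> {a, b}" by auto
  then have "card V \<le> card {a, b}" by (simp add: card_mono)
  also have "\<dots> \<le> 2" by (simp add: card_insert_le_m1)
  finally show False using assms by simp
qed

locale S2 =
  fixes A :: "'a set" and Q :: "'q set" and H :: "('q \<Rightarrow> 'a) set" and n :: nat
    and F :: "'a op set" and i :: nat
  assumes finA: "finite A" and HQ: "H \<subseteq> Q \<rightarrow>\<^sub>E A" and finH: "finite H"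
    and n3: "3 \<le> n" and Hinv: "H \<in> Inv A Q F" and iln: "i < n"
    and delta: "\<forall>a\<in>tuples_k A n n. \<forall>c\<in>a ` {..<n}.
      \<exists>s. (n, s) \<in> F \<and> s a = c \<and> (\<forall>x\<in>tuples_lt A n. s x = x i)"
begin

lemma inA: "h \<in> H \<Longrightarrow> r \<in> Q \<Longrightarrow> h r \<in> A"
  using HQ by (auto simp: PiE_iff)

lemma SA:
  assumes hh: "\<And>t. t<n \<Longrightarrow> hh t \<in> H" and S: "S \<subseteq> Q"
    and noninj: "\<And>r. r\<in>S \<Longrightarrow> card ((\<lambda>t. hh t r) ` {..<n}) < n"
    and q: "q \<in> Q" and inj: "inj_on (\<lambda>t. hh t q) {..<n}"
    and c: "c \<in> (\<lambda>t. hh t q) ` {..<n}"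
  shows "\<exists>h\<in>H. (\<forall>r\<in>S. h r = hh i r) \<and> h q = c"
proof -
  define a where "a = (\<lambda>t\<in>{..<n}. hh t q)"
  have img: "a ` {..<n} = (\<lambda>t. hh t q) ` {..<n}" unfolding a_def by auto
  have "a \<in> tuples A n" unfolding a_def tuples_def using inA hh q by auto
  moreover have "card (a ` {..<n}) = n" using img card_image[OF inj] by simp
  ultimately have "a \<in> tuples_k A n n" unfolding tuples_k_def by auto
  then obtain s where s: "(n,s) \<in> F" "s a = c" "\<forall>x\<in>tuples_lt A n. s x = x i"
    using delta c img by metis
  define h where "h = (\<lambda>r\<in>Q. s (\<lambda>t\<in>{..<n}. hh t r))"
  have "h \<in> H" using Hinv s(1) hh unfolding Inv_def h_def by blast
  moreover have "h r = hh i r" if r: "r \<in> S" for r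
  proof -
    define x where "x = (\<lambda>t\<in>{..<n}. hh t r)"
    have "x \<in> tuples A n" unfolding x_def tuples_def using inA hh S r by auto
    moreover have "x ` {..<n} = (\<lambda>t. hh t r) ` {..<n}" unfolding x_def by auto
    ultimately have "x \<in> tuples_lt A n" using noninj[OF r]
      unfolding tuples_lt_def tuples_k_def by auto
    then have "s x = x i" using s(3) by blast
    then show ?thesis using r S iln unfolding h_def x_def by auto
  qed
  moreover have "h q = c" using q s(2) unfolding h_def a_def by simp
  ultimately show ?thesis by blast
qed

lemma col_card: "j < n \<Longrightarrow> k < n \<Longrightarrow> j \<noteq> k \<Longrightarrow> f j = f k \<Longrightarrow> card (f ` {..<(n::nat)}) < n"
proof -
  assume a: "j < n" "k < n" "j \<noteq> k" "f j = f k"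
  have "\<not> inj_on f {..<n}" using a by (auto simp: inj_on_def)
  then have "card (f ` {..<n}) \<noteq> n" using inj_on_iff_eq_card[of "{..<n}" f] by simp
  moreover have "card (f ` {..<n}) \<le> n" using card_image_le[of "{..<n}" f] by simp
  ultimately show ?thesis by simp
qed

lemma switch:
  assumes q: "q \<in> Q" "n \<le> card (proj_set H q)" and S: "S \<subseteq> Q"
    and g: "g \<in> H" "hj \<in> H" "hk \<in> H"
    and dist: "g q \<noteq> hj q" "g q \<noteq> hk q" "hj q \<noteq> hk q"
    and col: "\<And>r. r \<in> S \<Longrightarrow> card (proj_set H r) < n \<or> g r = hj r \<or> g r = hk r \<or> hj r = hk r"
  shows "\<exists>h\<in>H. (\<forall>r\<in>S. h r = g r) \<and> h q = hj q"
proof -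
  have fin: "finite (proj_set H q)" using finH unfolding proj_set_def by simp
  have mem: "g q \<in> proj_set H q" "hj q \<in> proj_set H q" "hk q \<in> proj_set H q"
    using g unfolding proj_set_def by auto
  obtain e j k where e: "inj_on e {..<n}" "e ` {..<n} \<subseteq> proj_set H q" "j < n" "k < n"
    "j \<noteq> i" "k \<noteq> i" "j \<noteq> k" "e i = g q" "e j = hj q" "e k = hk q"
    using tup3[OF fin q(2) n3 iln mem dist] by blast
  define hh where "hh t = (if t = i then g else if t = j then hj else if t = k then hk
     else (SOME h. h \<in> H \<and> h q = e t))" for t
  have hhH: "hh t \<in> H \<and> hh t q = e t" if t: "t < n" for t
  proof (cases "t = i \<or> t = j \<or> t = k")
    case True then show ?thesis using e g unfolding hh_def by auto
  next
    case False
    have "e t \<in> proj_set H q" using e(2) t by auto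
    then have "\<exists>h. h \<in> H \<and> h q = e t" unfolding proj_set_def by auto
    then have "(SOME h. h \<in> H \<and> h q = e t) \<in> H \<and> (SOME h. h \<in> H \<and> h q = e t) q = e t"
      by (rule someI_ex)
    then show ?thesis using False unfolding hh_def by auto
  qed
  have hhi: "hh i = g" "hh j = hj" "hh k = hk" using e unfolding hh_def by auto
  have hq: "t < n \<Longrightarrow> hh t q = e t" for t using hhH by blast
  have inj: "inj_on (\<lambda>t. hh t q) {..<n}"
    using e(1) unfolding inj_on_def by (simp add: hq)
  have noninj: "card ((\<lambda>t. hh t r) ` {..<n}) < n" if r: "r \<in> S" for r
  proof -
    consider "card (proj_set H r) < n" | "g r = hj r" | "g r = hk r" | "hj r = hk r"
      using col[OF r] by blast
    then show ?thesis
    proof cases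
      case 1
      have sub: "(\<lambda>t. hh t r) ` {..<n} \<subseteq> proj_set H r" using hhH unfolding proj_set_def by auto
      have fr: "finite (proj_set H r)" using finH unfolding proj_set_def by simp
      show ?thesis using 1 card_mono[OF fr sub] by linarith
    next
      case 2 then show ?thesis using col_card[of i j "\<lambda>t. hh t r"] e iln hhi(1,2) by auto
    next
      case 3 then show ?thesis using col_card[of i k "\<lambda>t. hh t r"] e iln hhi(1,3) by auto
    next
      case 4 then show ?thesis using col_card[of j k "\<lambda>t. hh t r"] e iln hhi(2,3) by auto
    qed
  qed
  have c: "hj q \<in> (\<lambda>t. hh t q) ` {..<n}" using hhH e by (metis image_eqI lessThan_iff)
  obtain h where h: "h \<in> H" "\<forall>r\<in>S. h r = hh i r" "h q = hj q"
    using SA[of hh S q "hj q", OF _ S _ q(1) inj c] hhH noninj by blast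
  then show ?thesis using hhi by auto
qed

lemma main_lemma:
  assumes q: "q \<in> Q" "n \<le> card (proj_set H q)"
  shows "finite S \<Longrightarrow> S \<subseteq> Q \<Longrightarrow> q \<notin> S \<Longrightarrow>
    (\<And>p. p \<in> S \<Longrightarrow> n \<le> card (proj_set H p) \<Longrightarrow>
        \<forall>x\<in>proj_set H p. \<forall>y\<in>proj_set H q. \<exists>h\<in>H. h p = x \<and> h q = y) \<Longrightarrow>
    \<forall>g\<in>H. \<forall>c\<in>proj_set H q. \<exists>h\<in>H. (\<forall>r\<in>S. h r = g r) \<and> h q = c"
proof (induction S rule: finite_induct)
  case empty
  then show ?case unfolding proj_set_def by auto
next
  case (insert p S')
  have IH: "\<forall>g\<in>H. \<forall>c\<in>proj_set H q. \<exists>h\<in>H. (\<forall>r\<in>S'. h r = g r) \<and> h q = c"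
    using insert by auto
  show ?case
  proof (intro ballI)
    fix g c assume g: "g \<in> H" and c: "c \<in> proj_set H q"
    show "\<exists>h\<in>H. (\<forall>r\<in>insert p S'. h r = g r) \<and> h q = c"
    proof (cases "c = g q")
      case True then show ?thesis using g by blast
    next
      case False
      obtain hj where hj: "hj \<in> H" "\<forall>r\<in>S'. hj r = g r" "hj q = c" using IH g c by blast
      have finq: "finite (proj_set H q)" using finH unfolding proj_set_def by simp
      obtain d where d: "d \<in> proj_set H q" "d \<noteq> g q" "d \<noteq> c"
        using third_elem[OF finq, of "g q" c] q(2) n3 by auto
      obtain hk where hk: "hk \<in> H" "hk q = d" "n \<le> card (proj_set H p) \<longrightarrow> hk p = g p"
      proof (cases "n \<le> card (proj_set H p)")
        case True
        have "g p \<in> proj_set H p" using g unfolding proj_set_def by auto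
        then show ?thesis using insert.prems(3)[of p] True d(1) that by blast
      next
        case False
        then show ?thesis using d(1) that unfolding proj_set_def by auto
      qed
      have "\<exists>h\<in>H. (\<forall>r\<in>insert p S'. h r = g r) \<and> h q = hj q"
      proof (rule switch[OF q insert.prems(1) g hj(1) hk(1)])
        show "g q \<noteq> hj q" "g q \<noteq> hk q" "hj q \<noteq> hk q" using False hj(3) hk(2) d by auto
        fix r assume "r \<in> insert p S'"
        then show "card (proj_set H r) < n \<or> g r = hj r \<or> g r = hk r \<or> hj r = hk r"
          using hj(2) hk(3) by (cases "r = p") auto
      qed
      then show ?thesis using hj(3) by simp
    qed
  qed
qed

lemma CA1:
  assumes q: "q \<in> Q" "n \<le> card (proj_set H q)" and p: "p \<in> Q"
    and uv: "u \<in> H" "v \<in> H" "u p = v p" "u q \<noteq> v q"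
  shows "\<forall>d\<in>proj_set H q. \<exists>h\<in>H. h p = u p \<and> h q = d"
proof
  fix d assume d: "d \<in> proj_set H q"
  show "\<exists>h\<in>H. h p = u p \<and> h q = d"
  proof (cases "d = u q \<or> d = v q")
    case True then show ?thesis using uv by auto
  next
    case False
    obtain hj where hj: "hj \<in> H" "hj q = d" using d unfolding proj_set_def by auto
    have "\<exists>h\<in>H. (\<forall>r\<in>{p}. h r = u r) \<and> h q = hj q"
      by (rule switch[OF q _ uv(1) hj(1) uv(2)]) (use p uv False hj in auto)
    then show ?thesis using hj by auto
  qed
qed

lemma CA2:
  assumes q: "q \<in> Q" "n \<le> card (proj_set H q)" and p: "p \<in> Q"
    and full: "\<forall>d\<in>proj_set H q. \<exists>h\<in>H. h p = x \<and> h q = d"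
    and x': "x' \<in> proj_set H p"
  shows "\<forall>d\<in>proj_set H q. \<exists>h\<in>H. h p = x' \<and> h q = d"
proof
  fix d assume d: "d \<in> proj_set H q"
  obtain g where g: "g \<in> H" "g p = x'" using x' unfolding proj_set_def by auto
  show "\<exists>h\<in>H. h p = x' \<and> h q = d"
  proof (cases "d = g q")
    case True then show ?thesis using g by auto
  next
    case False
    have finq: "finite (proj_set H q)" using finH unfolding proj_set_def by simp
    obtain d2 where d2: "d2 \<in> proj_set H q" "d2 \<noteq> g q" "d2 \<noteq> d"
      using third_elem[OF finq, of "g q" d] q(2) n3 by auto
    obtain hj where hj: "hj \<in> H" "hj p = x" "hj q = d" using full d by blast
    obtain hk where hk: "hk \<in> H" "hk p = x" "hk q = d2" using full d2 by blast
    have "\<exists>h\<in>H. (\<forall>r\<in>{p}. h r = g r) \<and> h q = hj q"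
      by (rule switch[OF q _ g(1) hj(1) hk(1)]) (use p False hj hk d2 in auto)
    then show ?thesis using hj g by auto
  qed
qed

lemma PL:
  assumes p: "p \<in> Q" "n \<le> card (proj_set H p)" and q: "q \<in> Q" "n \<le> card (proj_set H q)"
    and pq: "p \<noteq> q" and np: "{p, q} \<notin> pairs0 A Q H"
  shows "\<forall>x\<in>proj_set H p. \<forall>y\<in>proj_set H q. \<exists>h\<in>H. h p = x \<and> h q = y"
proof (rule ccontr)
  assume nf: "\<not> ?thesis"
  have f1: "u q = v q" if uv: "u \<in> H" "v \<in> H" "u p = v p" for u v
  proof (rule ccontr)
    assume "u q \<noteq> v q"
    then have "\<forall>d\<in>proj_set H q. \<exists>h\<in>H. h p = u p \<and> h q = d" using CA1[OF q p(1) uv] by blast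
    then have "\<forall>x'\<in>proj_set H p. \<forall>d\<in>proj_set H q. \<exists>h\<in>H. h p = x' \<and> h q = d"
      using CA2[OF q p(1)] by blast
    then show False using nf by blast
  qed
  have f2: "u p = v p" if uv: "u \<in> H" "v \<in> H" "u q = v q" for u v
  proof (rule ccontr)
    assume "u p \<noteq> v p"
    then have "\<forall>d\<in>proj_set H p. \<exists>h\<in>H. h q = u q \<and> h p = d" using CA1[OF p q(1) uv] by blast
    then have "\<forall>y'\<in>proj_set H q. \<forall>d\<in>proj_set H p. \<exists>h\<in>H. h q = y' \<and> h p = d"
      using CA2[OF p q(1)] by blast
    then show False using nf by blast
  qed
  define \<phi> where "\<phi> a = (SOME y. \<exists>h\<in>H. h p = a \<and> h q = y)" for a
  have \<phi>h: "\<phi> (h p) = h q" if h: "h \<in> H" for h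
  proof -
    have "\<exists>y. \<exists>h'\<in>H. h' p = h p \<and> h' q = y" using h by blast
    then have "\<exists>h'\<in>H. h' p = h p \<and> h' q = \<phi> (h p)" unfolding \<phi>_def by (rule someI_ex)
    then show ?thesis using f1 h by metis
  qed
  have "bij_betw \<phi> (proj_set H p) (proj_set H q)"
  proof (rule bij_betw_imageI)
    show "inj_on \<phi> (proj_set H p)"
      unfolding proj_set_def inj_on_def using \<phi>h f2 by auto
    show "\<phi> ` proj_set H p = proj_set H q"
      unfolding proj_set_def using \<phi>h by (auto simp: image_iff)
  qed
  moreover have "proj_set H p \<subseteq> A" "proj_set H q \<subseteq> A"
    unfolding proj_set_def using inA p q by auto
  ultimately obtain \<sigma> where \<sigma>: "bij_betw \<sigma> A A" "\<forall>x\<in>proj_set H p. \<sigma> x = \<phi> x"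
    using bij_extend[OF finA] by blast
  have "\<forall>h\<in>H. h q = \<sigma> (h p)" using \<sigma>(2) \<phi>h unfolding proj_set_def by auto
  moreover have "{p, q} \<in> ksubsets Q 2" unfolding ksubsets_def using p q pq by auto
  ultimately have "{p, q} \<in> pairs0 A Q H" unfolding pairs0_def using \<sigma>(1) by blast
  then show False using np by simp
qed

lemma lift_agree:
  assumes "f \<in> lift_set A Q R H" shows "\<exists>h\<in>H. \<forall>r\<in>R. h r = f r"
proof -
  from assms obtain h where h: "h \<in> H" "restrict f R = restrict h R"
    unfolding lift_set_def restr_set_def by auto
  have "\<forall>r\<in>R. h r = f r"
  proof
    fix r assume r: "r \<in> R"
    have "restrict f R r = restrict h R r" using h(2) by simp
    then show "h r = f r" using r by simp
  qed
  then show ?thesis using h(1) by blast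
qed

lemma decomp:
  assumes fQ: "finite Q" and Hne: "H \<noteq> {}"
    and f: "f \<in> (\<Inter>R\<in>ksubsets Q 1 \<union> pairs0 A Q H \<union> {small_coords Q H n}. lift_set A Q R H)"
  shows "f \<in> H"
proof -
  let ?R0 = "small_coords Q H n"
  have fl: "\<And>R. R \<in> ksubsets Q 1 \<union> pairs0 A Q H \<union> {?R0} \<Longrightarrow> \<exists>h\<in>H. \<forall>r\<in>R. h r = f r"
    using f lift_agree by blast
  have fQA: "f \<in> Q \<rightarrow>\<^sub>E A" using f unfolding lift_set_def by auto
  have f1: "\<exists>h\<in>H. h q = f q" if "q \<in> Q" for q
  proof -
    have "{q} \<in> ksubsets Q 1" unfolding ksubsets_def using that by auto
    then show ?thesis using fl by blast
  qed
  have R0Q: "?R0 \<subseteq> Q" unfolding small_coords_def by auto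
  have finR0: "finite ?R0" using fQ R0Q finite_subset by blast
  have ind: "finite S \<Longrightarrow> S \<subseteq> Q \<Longrightarrow> \<exists>h\<in>H. \<forall>r\<in>S \<union> ?R0. h r = f r" for S
  proof (induction S rule: finite_induct)
    case empty then show ?case using fl by auto
  next
    case (insert q S)
    then obtain g where g: "g \<in> H" "\<forall>r\<in>S \<union> ?R0. g r = f r" by auto
    have qQ: "q \<in> Q" using insert by auto
    show ?case
    proof (cases "q \<in> ?R0")
      case True then show ?thesis using g by auto
    next
      case qB: False
      then have qn: "n \<le> card (proj_set H q)" using qQ unfolding small_coords_def by auto
      show ?thesis
      proof (cases "\<exists>p\<in>S \<union> ?R0. {p, q} \<in> pairs0 A Q H")
        case True
        then obtain p where p: "p \<in> S \<union> ?R0" "{p, q} \<in> pairs0 A Q H" by blast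
        then obtain p' q' \<sigma> where pq: "{p, q} = {p', q'}" "bij_betw \<sigma> A A" "\<forall>h\<in>H. h q' = \<sigma> (h p')"
          unfolding pairs0_def by blast
        obtain h0 where h0: "h0 \<in> H" "h0 p = f p" "h0 q = f q" using fl[of "{p,q}"] p(2) by auto
        have "g q = f q"
        proof (cases "p = p' \<and> q = q'")
          case True
          then show ?thesis using pq(3) g h0 p(1) by metis
        next
          case False
          then have "p = q' \<and> q = p'" using pq(1) by (auto simp: doubleton_eq_iff)
          then have "\<sigma> (g q) = \<sigma> (h0 q)" using pq(3) g h0 p(1) by metis
          moreover have "g q \<in> A" "h0 q \<in> A" using inA g(1) h0(1) qQ by auto
          ultimately have "g q = h0 q" using pq(2) unfolding bij_betw_def inj_on_def by blast
          then show ?thesis using h0 by simp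
        qed
        then show ?thesis using g by auto
      next
        case False
        have "\<forall>g\<in>H. \<forall>c\<in>proj_set H q. \<exists>h\<in>H. (\<forall>r\<in>S \<union> ?R0. h r = g r) \<and> h q = c"
        proof (rule main_lemma[OF qQ qn])
          show "finite (S \<union> ?R0)" using insert finR0 by simp
          show "S \<union> ?R0 \<subseteq> Q" using insert R0Q by simp
          show "q \<notin> S \<union> ?R0" using insert qB by simp
          fix p assume p: "p \<in> S \<union> ?R0" "n \<le> card (proj_set H p)"
          show "\<forall>x\<in>proj_set H p. \<forall>y\<in>proj_set H q. \<exists>h\<in>H. h p = x \<and> h q = y"
            by (rule PL) (use p insert R0Q False qQ qn qB in auto)
        qed
        moreover have "f q \<in> proj_set H q" using f1[OF qQ] unfolding proj_set_def by (metis image_eqI)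
        ultimately obtain h where "h \<in> H" "\<forall>r\<in>S \<union> ?R0. h r = g r" "h q = f q"
          using g(1) by blast
        then show ?thesis using g(2) by auto
      qed
    qed
  qed
  obtain h where h: "h \<in> H" "\<forall>r\<in>Q \<union> ?R0. h r = f r" using ind[OF fQ] by blast
  have "h = f" using PiE_ext[of h Q "\<lambda>_. A" f] h HQ fQA by auto
  then show ?thesis using h by simp
qed

end

lemma restr_inv:
  assumes Hi: "H \<in> Inv A Q F" and P: "P \<subseteq> Q"
  shows "restr_set H P \<in> Inv A P F"
  unfolding Inv_def
proof (intro CollectI conjI allI impI)
  have HQ: "H \<subseteq> Q \<rightarrow>\<^sub>E A" using Hi unfolding Inv_def by auto
  show "restr_set H P \<subseteq> P \<rightarrow>\<^sub>E A" unfolding restr_set_def using HQ P by (auto simp: PiE_iff) (metis PiE_mem subsetD)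
  fix m f h'
  assume a: "(m, f) \<in> F \<and> (\<forall>i<m. h' i \<in> restr_set H P)"
  then have "\<forall>i\<in>{..<m}. \<exists>h\<in>H. h' i = restrict h P" unfolding restr_set_def by auto
  then obtain hh where hh: "\<forall>i\<in>{..<m}. hh i \<in> H \<and> h' i = restrict (hh i) P" by metis
  define k where "k = (\<lambda>q\<in>Q. f (\<lambda>i\<in>{..<m}. hh i q))"
  have "k \<in> H" using Hi a hh unfolding Inv_def k_def by auto
  moreover have "(\<lambda>q\<in>P. f (\<lambda>i\<in>{..<m}. h' i q)) = restrict k P"
  proof
    fix q show "(\<lambda>q\<in>P. f (\<lambda>i\<in>{..<m}. h' i q)) q = restrict k P q"
    proof (cases "q \<in> P")
      case True
      then have "(\<lambda>i\<in>{..<m}. h' i q) = (\<lambda>i\<in>{..<m}. hh i q)" using hh by auto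
      then show ?thesis using True P unfolding k_def by auto
    qed simp
  qed
  ultimately show "(\<lambda>q\<in>P. f (\<lambda>i\<in>{..<m}. h' i q)) \<in> restr_set H P" unfolding restr_set_def by auto
qed

lemma lift_inv:
  assumes FA: "F \<subseteq> ops A" and R: "R \<subseteq> Q" and Ri: "restr_set H R \<in> Inv A R F"
    and hi: "\<forall>i<m. h i \<in> H" and HQ: "H \<subseteq> Q \<rightarrow>\<^sub>E A" and mf: "(m, f) \<in> F"
  shows "(\<lambda>q\<in>Q. f (\<lambda>i\<in>{..<m}. h i q)) \<in> lift_set A Q R H"
proof -
  have fA: "f x \<in> A" if "x \<in> tuples A m" for x
    using FA mf that unfolding ops_def by auto
  have "(\<lambda>q\<in>Q. f (\<lambda>i\<in>{..<m}. h i q)) \<in> Q \<rightarrow>\<^sub>E A"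
  proof
    fix q assume q: "q \<in> Q"
    have "(\<lambda>i\<in>{..<m}. h i q) \<in> tuples A m" unfolding tuples_def using hi HQ q by (auto simp: PiE_iff)
    then show "(\<lambda>q\<in>Q. f (\<lambda>i\<in>{..<m}. h i q)) q \<in> A" using q fA by simp
  qed auto
  moreover have "(\<lambda>q\<in>R. f (\<lambda>i\<in>{..<m}. restrict (h i) R q)) \<in> restr_set H R"
  proof -
    have all: "\<forall>m f h. (m, f) \<in> F \<and> (\<forall>i<m. h i \<in> restr_set H R) \<longrightarrow>
        (\<lambda>q\<in>R. f (\<lambda>i\<in>{..<m}. h i q)) \<in> restr_set H R" using Ri unfolding Inv_def by blast
    have "\<forall>i<m. restrict (h i) R \<in> restr_set H R" using hi unfolding restr_set_def by auto
    then show ?thesis using all[rule_format, of m f "\<lambda>i. restrict (h i) R"] mf by blast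
  qed
  moreover have "(\<lambda>q\<in>R. f (\<lambda>i\<in>{..<m}. restrict (h i) R q)) = restrict (\<lambda>q\<in>Q. f (\<lambda>i\<in>{..<m}. h i q)) R"
  proof
    fix q show "(\<lambda>q\<in>R. f (\<lambda>i\<in>{..<m}. restrict (h i) R q)) q = restrict (\<lambda>q\<in>Q. f (\<lambda>i\<in>{..<m}. h i q)) R q"
    proof (cases "q \<in> R")
      case True
      then have "(\<lambda>i\<in>{..<m}. restrict (h i) R q) = (\<lambda>i\<in>{..<m}. h i q)" by auto
      then show ?thesis using True R by auto
    qed simp
  qed
  ultimately show ?thesis unfolding lift_set_def by auto
qed

theorem theorem2:
  fixes A :: "'a set" and Q :: "'q set" and H :: "('q \<Rightarrow> 'a) set"
    and n :: nat and F :: "'a op set"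
  assumes "finite A" "A \<noteq> {}" "finite Q" "Q \<noteq> {}"
    and "H \<subseteq> Q \<rightarrow>\<^sub>E A" "finite H" "H \<noteq> {}"
    and "n \<ge> 3" and "is_clone A F" and "Delta_s A F n"
  shows "H \<in> Inv A Q F \<longleftrightarrow>
    ((\<forall>P \<in> ksubsets Q 1 \<union> pairs0 A Q H \<union> {small_coords Q H n}.
        restr_set H P \<in> Inv A P F) \<and>
     decomposable A Q (ksubsets Q 1 \<union> pairs0 A Q H \<union> {small_coords Q H n}) H)"
proof -
  let ?RR = "ksubsets Q 1 \<union> pairs0 A Q H \<union> {small_coords Q H n}"
  have RRQ: "R \<subseteq> Q" if "R \<in> ?RR" for R
    using that unfolding ksubsets_def pairs0_def small_coords_def by auto
  have FA: "F \<subseteq> ops A" using assms(9) unfolding is_clone_def by auto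
  show ?thesis
  proof
    assume Hi: "H \<in> Inv A Q F"
    obtain i where i: "i < n" "\<forall>a\<in>tuples_k A n n. \<forall>c\<in>a ` {..<n}.
      \<exists>s. (n, s) \<in> F \<and> s a = c \<and> (\<forall>x\<in>tuples_lt A n. s x = x i)"
      using assms(10) unfolding Delta_s_def by blast
    interpret S2 A Q H n F i
      using assms Hi i by unfold_locales auto
    have "\<forall>P\<in>?RR. restr_set H P \<in> Inv A P F" using restr_inv[OF Hi] RRQ by blast
    moreover have "decomposable A Q ?RR H"
      unfolding decomposable_def
    proof
      show "H \<subseteq> (\<Inter>R\<in>?RR. lift_set A Q R H)"
        unfolding lift_set_def restr_set_def using assms(5) by auto
      show "(\<Inter>R\<in>?RR. lift_set A Q R H) \<subseteq> H"
        using decomp[OF assms(3,7)] by blast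
    qed
    ultimately show "(\<forall>P\<in>?RR. restr_set H P \<in> Inv A P F) \<and> decomposable A Q ?RR H" by blast
  next
    assume a: "(\<forall>P\<in>?RR. restr_set H P \<in> Inv A P F) \<and> decomposable A Q ?RR H"
    show "H \<in> Inv A Q F"
      unfolding Inv_def
    proof (intro CollectI conjI allI impI)
      show "H \<subseteq> Q \<rightarrow>\<^sub>E A" by (rule assms(5))
      fix m f h assume mf: "(m, f) \<in> F \<and> (\<forall>i<m. h i \<in> H)"
      have "(\<lambda>q\<in>Q. f (\<lambda>i\<in>{..<m}. h i q)) \<in> (\<Inter>R\<in>?RR. lift_set A Q R H)"
        using lift_inv[OF FA RRQ _ _ assms(5)] a mf by blast
      then show "(\<lambda>q\<in>Q. f (\<lambda>i\<in>{..<m}. h i q)) \<in> H"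
        using a unfolding decomposable_def by blast
    qed
  qed
qed

end
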